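(* Let $1\le b\le k$ be integers. The number of words $w$ of length $k$ over the alphabet $\{1,\dots,b\}$ such that every letter $1,\dots,b$ occurs in $w$ at least once and $w$ avoids each of the patterns $111$, $212$, $112$ and $213$ equals $$d_{k,b}=\binom{b}{k-b}C_b,$$ where $C_b=\frac{1}{b+1}\binom{2b}{b}$ is the $b$-th Catalan number (and the binomial coefficient is $0$ when $k-b>b$).
   Context: A word $w$ contains a pattern $p=p_1\cdots p_m$ (a word over positive integers) if $w$ has a subsequence $w_{i_1}\cdots w_{i_m}$, $i_1<\dots<i_m$, that is order-isomorphic to $p$, i.e. $w_{i_s}<w_{i_t}$ iff $p_s<p_t$ and $w_{i_s}=w_{i_t}$ iff $p_s=p_t$ for all $s,t$; otherwise $w$ avoids $p$. *)

theory Defs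
  imports Main "HOL-Library.Sublist"
begin

definition order_iso :: "nat list \<Rightarrow> nat list \<Rightarrow> bool" where
  "order_iso u p \<longleftrightarrow> length u = length p \<and>
     (\<forall>s<length p. \<forall>t<length p.
        (u ! s < u ! t \<longleftrightarrow> p ! s < p ! t) \<and> (u ! s = u ! t \<longleftrightarrow> p ! s = p ! t))"

definition contains :: "nat list \<Rightarrow> nat list \<Rightarrow> bool" where
  "contains w p \<longleftrightarrow> (\<exists>u. subseq u w \<and> order_iso u p)"

definition avoids :: "nat list \<Rightarrow> nat list \<Rightarrow> bool" where
  "avoids w p \<longleftrightarrow> \<not> contains w p"

definition catalan :: "nat \<Rightarrow> nat" where
  "catalan n = (2 * n choose n) div (n + 1)"

end

theory Submission
  imports Defs "HOL-Computational_Algebra.Formal_Power_Series"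
begin


definition cr :: "nat \<Rightarrow> real" where "cr n = real (2*n choose n) / real (n+1)"

lemma central_rec: "(n+1) * (2*(n+1) choose (n+1)) = 2*(2*n+1) * (2*n choose n)"
proof -
  have e1: "Suc n * (Suc (Suc (2*n)) choose Suc n) = Suc (Suc (2*n)) * (Suc (2*n) choose n)"
    by (rule Suc_times_binomial)
  have e2: "(Suc (2*n) choose n) = (Suc (2*n) choose Suc n)"
  proof -
    have "(Suc (2*n) choose n) = (Suc (2*n) choose (Suc (2*n) - n))"
      by (rule binomial_symmetric) simp
    moreover have "Suc (2*n) - n = Suc n" by simp
    ultimately show ?thesis by simp
  qed
  have e3: "Suc (2*n) * (2*n choose n) = (Suc (2*n) choose Suc n) * Suc n"
    by (rule Suc_times_binomial_eq)
  have "Suc n * (Suc n * (Suc (Suc (2*n)) choose Suc n)) = Suc n * (2*Suc (2*n) * (2*n choose n))"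
  proof -
    have "Suc n * (Suc n * (Suc (Suc (2*n)) choose Suc n)) = Suc n * (Suc (Suc (2*n)) * (Suc (2*n) choose n))"
      by (simp only: e1)
    also have "\<dots> = Suc (Suc (2*n)) * ((Suc (2*n) choose Suc n) * Suc n)"
      unfolding e2 by (simp only: ac_simps)
    also have "\<dots> = Suc (Suc (2*n)) * (Suc (2*n) * (2*n choose n))" by (simp only: e3)
    also have "\<dots> = Suc n * (2*Suc (2*n) * (2*n choose n))" by (simp add: algebra_simps)
    finally show ?thesis .
  qed
  hence "Suc n * (Suc (Suc (2*n)) choose Suc n) = 2*Suc (2*n) * (2*n choose n)"
    by (simp only: mult_cancel1) simp
  moreover have "2*(n+1) = Suc (Suc (2*n))" by simp
  ultimately show ?thesis by simp
qed

lemma solve_lin: "(a::real) > 0 \<Longrightarrow> a * x = r \<Longrightarrow> x = r / a"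
  by (simp add: field_simps)

lemma cr_Suc: "cr (Suc n) = cr n * (2*(2*real n+1)) / (real n+2)"
proof -
  define X where "X = real (2*(n+1) choose (n+1))"
  define Y where "Y = real (2*n choose n)"
  have "real ((n+1) * (2*(n+1) choose (n+1))) = real (2*(2*n+1) * (2*n choose n))"
    using central_rec by presburger
  hence "(real n+1) * X = 2*(2*real n+1) * Y"
    unfolding X_def Y_def by (simp only: of_nat_mult of_nat_add of_nat_1 of_nat_numeral)
  hence "X = 2*(2*real n+1) * Y / (real n + 1)"
    by (intro solve_lin) auto
  moreover have "cr (Suc n) = X / (real n + 2)" unfolding cr_def X_def by simp
  moreover have "cr n = Y / (real n + 1)" unfolding cr_def Y_def by simp
  ultimately show ?thesis by simp
qed

definition ucat :: "nat \<Rightarrow> real" where "ucat n = ((1/2::real) gchoose n) * (-4)^n"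

lemma u_Suc: "ucat (Suc n) = ucat n * (4 * real n - 2) / (real n + 1)"
proof -
  define G where "G = ((1/2::real) gchoose n)"
  define H where "H = ((1/2::real) gchoose (Suc n))"
  have "(1/2::real) * G = real n * G + real (Suc n) * H"
    unfolding G_def H_def by (rule gbinomial_mult_1)
  hence "(real n + 1) * H = G * (1/2 - real n)" by (simp add: algebra_simps)
  hence hh: "(real n + 1) * H = G * (1/2 - real n)" .
  have "(real n + 1) * ucat (Suc n) = -4 * (-4)^n * ((real n + 1) * H)"
    unfolding ucat_def H_def by (simp add: algebra_simps)
  also have "\<dots> = ucat n * (4 * real n - 2)" unfolding hh by (simp add: ucat_def G_def algebra_simps)
  finally show ?thesis by (intro solve_lin) auto
qed

lemma u_cr: "ucat (Suc n) = -2 * cr n"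
proof (induction n)
  case 0 show ?case by (simp add: ucat_def cr_def)
next
  case (Suc n)
  have "ucat (Suc (Suc n)) = ucat (Suc n) * (4 * real (Suc n) - 2) / (real (Suc n) + 1)" by (rule u_Suc)
  also have "\<dots> = -2 * cr n * (4 * real n + 2) / (real n + 2)" using Suc by (simp add: algebra_simps)
  also have "\<dots> = -2 * cr (Suc n)" by (simp only: cr_Suc) (simp add: field_simps)
  finally show ?case .
qed

lemma u0: "ucat 0 = 1" by (simp add: ucat_def)

lemma u_conv: "(\<Sum>k\<le>n. ucat k * ucat (n-k)) = (1 gchoose n) * (-4)^n"
proof -
  have "(\<Sum>k\<le>n. ucat k * ucat (n-k)) = (\<Sum>k\<le>n. ((1/2::real) gchoose k) * ((1/2) gchoose (n-k)) * (-4)^n)"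
    by (rule sum.cong) (auto simp: ucat_def power_add[symmetric])
  also have "\<dots> = (\<Sum>k\<le>n. ((1/2::real) gchoose k) * ((1/2) gchoose (n-k))) * (-4)^n"
    by (simp add: sum_distrib_right)
  also have "(\<Sum>k\<le>n. ((1/2::real) gchoose k) * ((1/2) gchoose (n-k))) = (1/2+1/2) gchoose n"
    using gbinomial_Vandermonde[of "1/2::real" "1/2" n] by (simp add: atMost_atLeast0)
  finally show ?thesis by simp
qed

lemma cr_conv: "(\<Sum>m\<le>n. cr (n-m) * cr m) = cr (Suc n)"
proof -
  have g0: "(1::real) gchoose (Suc (Suc n)) = 0"
    using binomial_gbinomial[of 1 "Suc (Suc n)", where 'a=real] by simp
  have "(\<Sum>k\<le>Suc (Suc n). ucat k * ucat (Suc (Suc n)-k)) = 0" using u_conv[of "Suc (Suc n)"] g0 by simp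
  moreover have "(\<Sum>k\<le>Suc (Suc n). ucat k * ucat (Suc (Suc n)-k)) =
     ucat 0 * ucat (Suc (Suc n)) + ((\<Sum>k\<le>n. ucat (Suc k) * ucat (Suc (n - k))) + ucat (Suc (Suc n)) * ucat 0)"
    apply (subst sum.atMost_Suc_shift)
    apply (subst sum.atMost_Suc)
    apply (simp add: Suc_diff_le)
    done
  moreover have "(\<Sum>k\<le>n. ucat (Suc k) * ucat (Suc (n - k))) = 4 * (\<Sum>m\<le>n. cr (n-m) * cr m)"
    by (simp add: u_cr sum_distrib_left mult.commute)
  ultimately have "2 * ucat (Suc (Suc n)) + 4 * (\<Sum>m\<le>n. cr (n-m) * cr m) = 0" by (simp add: u0)
  thus ?thesis by (simp add: u_cr)
qed



definition P3 :: "nat \<Rightarrow> nat \<Rightarrow> nat \<Rightarrow> bool" where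
  "P3 a b c \<longleftrightarrow> (a=b \<and> b=c) \<or> (b<a \<and> a=c) \<or> (a=b \<and> b<c) \<or> (b<a \<and> a<c)"

definition valid :: "nat list \<Rightarrow> bool" where
  "valid w \<longleftrightarrow> \<not>(\<exists>a b c. subseq [a,b,c] w \<and> P3 a b c)"

lemma all3: "(\<forall>s<(3::nat). P s) \<longleftrightarrow> P 0 \<and> P 1 \<and> P 2"
  by (auto simp: numeral_3_eq_3 numeral_2_eq_2 less_Suc_eq)

lemma len3: "length u = 3 \<Longrightarrow> \<exists>x y z. u = [x,y,z]"
  by (cases u; cases "tl u"; cases "tl (tl u)") (auto simp: numeral_3_eq_3)

lemma contains3: "length p = 3 \<Longrightarrow> contains w p \<longleftrightarrow> (\<exists>x y z. subseq [x,y,z] w \<and> order_iso [x,y,z] p)"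
  unfolding contains_def
  apply (auto dest: len3)
   apply (frule order_iso_def[THEN iffD1])
   apply (auto dest!: len3)
  done
lemma allS3: "(\<forall>s<Suc (Suc (Suc 0)). P s) \<longleftrightarrow> P 0 \<and> P (Suc 0) \<and> P (Suc (Suc 0))"
  by (auto simp: less_Suc_eq)
lemma oi111: "order_iso [x,y,z] [1,1,1] \<longleftrightarrow> x=y \<and> y=z"
  unfolding order_iso_def by (simp add: allS3) auto
lemma oi212: "order_iso [x,y,z] [2,1,2] \<longleftrightarrow> y<x \<and> x=z"
  unfolding order_iso_def by (simp add: allS3) auto
lemma oi112: "order_iso [x,y,z] [1,1,2] \<longleftrightarrow> x=y \<and> y<z"
  unfolding order_iso_def by (simp add: allS3) auto
lemma oi213: "order_iso [x,y,z] [2,1,3] \<longleftrightarrow> y<x \<and> x<z"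
  unfolding order_iso_def by (simp add: allS3) auto

lemma len_lit: "length [a,b,c] = 3" by simp

lemma av111: "avoids w [1,1,1] \<longleftrightarrow> \<not>(\<exists>a b c. subseq [a,b,c] w \<and> a=b \<and> b=c)"
  unfolding avoids_def contains3[OF len_lit] oi111 by blast
lemma av212: "avoids w [2,1,2] \<longleftrightarrow> \<not>(\<exists>a b c. subseq [a,b,c] w \<and> b<a \<and> a=c)"
  unfolding avoids_def contains3[OF len_lit] oi212 by blast
lemma av112: "avoids w [1,1,2] \<longleftrightarrow> \<not>(\<exists>a b c. subseq [a,b,c] w \<and> a=b \<and> b<c)"
  unfolding avoids_def contains3[OF len_lit] oi112 by blast
lemma av213: "avoids w [2,1,3] \<longleftrightarrow> \<not>(\<exists>a b c. subseq [a,b,c] w \<and> b<a \<and> a<c)"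
  unfolding avoids_def contains3[OF len_lit] oi213 by blast

lemma valid_iff: "(avoids w [1,1,1] \<and> avoids w [2,1,2] \<and> avoids w [1,1,2] \<and> avoids w [2,1,3]) \<longleftrightarrow> valid w"
  unfolding av111 av212 av112 av213 valid_def P3_def by blast

lemma subseq_set: "subseq xs ys \<Longrightarrow> set xs \<subseteq> set ys"
  by (metis subseq_conv_nths set_nths_subset)

lemma subseq_map_inv: "subseq xs (map f ys) \<Longrightarrow> \<exists>zs. xs = map f zs \<and> subseq zs ys"
  by (metis nths_map subseq_conv_nths)

lemma P3_le: "P3 a b c \<Longrightarrow> b \<le> a \<and> a \<le> c"
  unfolding P3_def by auto

lemma P3_mono:
  assumes "\<And>u v. u \<in> {a,b,c} \<Longrightarrow> v \<in> {a,b,c} \<Longrightarrow> u < v \<Longrightarrow> f u < f v"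
  shows "P3 (f a) (f b) (f c) \<longleftrightarrow> P3 a b c"
proof -
  have lt: "f u < f v \<longleftrightarrow> u < v" if "u \<in> {a,b,c}" "v \<in> {a,b,c}" for u v
    using assms[OF that] assms[OF that(2,1)] by (metis less_asym' linorder_neqE_nat)
  have eq: "f u = f v \<longleftrightarrow> u = v" if "u \<in> {a,b,c}" "v \<in> {a,b,c}" for u v
    using assms[OF that] assms[OF that(2,1)] by (metis less_irrefl linorder_neqE_nat)
  show ?thesis unfolding P3_def by (simp add: lt eq)
qed

lemma valid_map:
  assumes "valid w" "\<And>u v. u \<in> set w \<Longrightarrow> v \<in> set w \<Longrightarrow> u < v \<Longrightarrow> f u < f v"
  shows "valid (map f w)"
  unfolding valid_def
proof
  assume "\<exists>a b c. subseq [a,b,c] (map f w) \<and> P3 a b c"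
  then obtain a b c where s: "subseq [a,b,c] (map f w)" and p: "P3 a b c" by blast
  from subseq_map_inv[OF s] obtain zs where zs1: "[a,b,c] = map f zs" and zs2: "subseq zs w"
    by (elim exE conjE)
  have "length zs = 3" using arg_cong[OF zs1, of length] by simp
  from len3[OF this] obtain a' b' c' where z: "zs = [a',b',c']" by (elim exE)
  have abc: "a = f a'" "b = f b'" "c = f c'" using zs1 z by simp_all
  have sub: "{a',b',c'} \<subseteq> set w" using subseq_set[OF zs2] z by simp
  have "P3 (f a') (f b') (f c') = P3 a' b' c'"
    by (rule P3_mono) (use assms(2) sub in blast)
  hence "P3 a' b' c'" using p abc by simp
  thus False using assms(1) zs2 z unfolding valid_def by blast
qed

lemma valid_subseq: "valid w \<Longrightarrow> subseq v w \<Longrightarrow> valid v"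
  unfolding valid_def using subseq_order.order_trans by blast

lemma subseq3_append: "subseq [a,b,c] (xs@ys) \<Longrightarrow>
   subseq [a,b,c] xs \<or> (a \<in> set xs \<and> subseq [b,c] ys) \<or> (subseq [a,b] xs \<and> c \<in> set ys) \<or> subseq [a,b,c] ys"
  apply (erule subseq_appendE)
  apply (auto simp: Cons_eq_append_conv append_eq_Cons_conv subseq_singleton_left)
  done

lemma subseq2_set: "subseq [a,b] xs \<Longrightarrow> a \<in> set xs \<and> b \<in> set xs"
  using subseq_set by fastforce

lemma valid_app:
  assumes "valid xs" "valid ys" "\<And>u v. u \<in> set xs \<Longrightarrow> v \<in> set ys \<Longrightarrow> v < u"
  shows "valid (xs @ ys)"
  unfolding valid_def
proof
  assume "\<exists>a b c. subseq [a,b,c] (xs@ys) \<and> P3 a b c"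
  then obtain a b c where s: "subseq [a,b,c] (xs@ys)" and p: "P3 a b c" by blast
  from P3_le[OF p] have ac: "a \<le> c" by simp
  from subseq3_append[OF s] show False
  proof (elim disjE conjE)
    assume "subseq [a,b,c] xs" thus False using assms(1) p unfolding valid_def by blast
  next
    assume "a \<in> set xs" "subseq [b,c] ys" thus False using assms(3) ac subseq2_set by force
  next
    assume "subseq [a,b] xs" "c \<in> set ys" thus False using assms(3) ac subseq2_set by force
  next
    assume "subseq [a,b,c] ys" thus False using assms(2) p unfolding valid_def by blast
  qed
qed

lemma subseq3_single: "\<not> subseq [a,b,c] [x]"
  by simp

lemma subseq2_single: "\<not> subseq [a,b] [x]"
  by simp

lemma valid_Cons_min:
  assumes "valid ys" "\<And>v. v \<in> set ys \<Longrightarrow> x < v"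
  shows "valid (x # ys)"
  unfolding valid_def
proof
  assume "\<exists>a b c. subseq [a,b,c] (x#ys) \<and> P3 a b c"
  then obtain a b c where s: "subseq [a,b,c] ([x]@ys)" and p: "P3 a b c" by auto
  from P3_le[OF p] have ba: "b \<le> a" by simp
  from subseq3_append[OF s] show False
  proof (elim disjE conjE)
    assume "subseq [a,b,c] [x]" thus False by (simp split: if_splits)
  next
    assume "a \<in> set [x]" "subseq [b,c] ys" thus False using assms(2) ba subseq2_set by force
  next
    assume "subseq [a,b] [x]" "c \<in> set ys" thus False by (simp split: if_splits)
  next
    assume "subseq [a,b,c] ys" thus False using assms(1) p unfolding valid_def by blast
  qed
qed

lemma valid_Cons_min_snoc:
  assumes "valid ys" "\<And>v. v \<in> set ys \<Longrightarrow> x < v"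
  shows "valid (x # ys @ [x])"
  unfolding valid_def
proof
  have v1: "valid (x # ys)" by (rule valid_Cons_min[OF assms])
  assume "\<exists>a b c. subseq [a,b,c] (x#ys@[x]) \<and> P3 a b c"
  then obtain a b c where s: "subseq [a,b,c] ((x#ys)@[x])" and p: "P3 a b c" by auto
  from P3_le[OF p] have ba: "b \<le> a" "a \<le> c" by simp_all
  from subseq3_append[OF s] show False
  proof (elim disjE conjE)
    assume "subseq [a,b,c] (x#ys)" thus False using v1 p unfolding valid_def by blast
  next
    assume "a \<in> set (x#ys)" "subseq [b,c] [x]" thus False by (simp split: if_splits)
  next
    assume h: "subseq [a,b] (x#ys)" "c \<in> set [x]"
    have "b \<in> set ys" using h(1) by (auto split: if_splits simp: subseq_singleton_left dest: subseq2_set)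
    thus False using assms(2) ba h(2) by force
  next
    assume "subseq [a,b,c] [x]" thus False by (simp split: if_splits)
  qed
qed


definition V :: "nat \<Rightarrow> nat list set" where "V b = {w. set w = {1..b} \<and> valid w}"

definition con :: "nat \<Rightarrow> nat list \<Rightarrow> nat list \<Rightarrow> nat list \<Rightarrow> nat list" where
  "con m x y r = map (\<lambda>v. v + (m+1)) x @ 1 # map Suc y @ r"

lemma img_sub: "(\<lambda>v::nat. v - c) ` {c+1..d} = {1..d-c}"
proof
  show "(\<lambda>v::nat. v - c) ` {c+1..d} \<subseteq> {1..d-c}" by auto
  show "{1..d-c} \<subseteq> (\<lambda>v::nat. v - c) ` {c+1..d}"
  proof
    fix v assume "v \<in> {1..d-c}"
    thus "v \<in> (\<lambda>v::nat. v - c) ` {c+1..d}" by (intro image_eqI[where x="v+c"]) auto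
  qed
qed

lemma con_in:
  assumes mb: "m \<le> b" and r: "r \<in> {[],[1]}" and x: "x \<in> V (b-m)" and y: "y \<in> V m"
  shows "con m x y r \<in> V (Suc b)"
proof -
  have sx: "set x = {1..b-m}" and vx: "valid x" using x by (auto simp: V_def)
  have sy: "set y = {1..m}" and vy: "valid y" using y by (auto simp: V_def)
  define A where "A = map (\<lambda>v. v + (m+1)) x"
  define B where "B = map Suc y"
  have e: "b - m + (m+1) = Suc b" using mb by simp
  have sA: "set A = {m+2..Suc b}" unfolding A_def set_map sx image_add_atLeastAtMost' e by simp
  have sB: "set B = {2..Suc m}" unfolding B_def set_map sy by simp
  have vA: "valid A" unfolding A_def by (rule valid_map[OF vx]) simp
  have vB: "valid B" unfolding B_def by (rule valid_map[OF vy]) simp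
  have gt: "\<And>v. v \<in> set B \<Longrightarrow> 1 < v" using sB by auto
  have vT: "valid (1 # B @ r)"
    using r valid_Cons_min[OF vB gt] valid_Cons_min_snoc[OF vB gt] by auto
  have sT: "set (1 # B @ r) \<subseteq> {1..Suc m}" using sB r by auto
  have vw: "valid (A @ 1 # B @ r)"
    by (rule valid_app[OF vA vT]) (use sA sT in force)
  have "set (A @ 1 # B @ r) = {1..Suc b}"
    using sA sB r mb by auto
  thus ?thesis using vw unfolding V_def con_def A_def B_def by simp
qed

lemma ge1: "w \<in> V b \<Longrightarrow> v \<in> set w \<Longrightarrow> 1 \<le> v"
  unfolding V_def by auto

lemma split_interval:
  assumes u: "X \<union> Y = {2..Suc b}" and o: "\<forall>u\<in>X. \<forall>v\<in>Y. v < u"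
  shows "Y = {2..Suc (card Y)} \<and> X = {card Y + 2..Suc b} \<and> card Y \<le> b"
proof (cases "Y = {}")
  case True
  thus ?thesis using u by auto
next
  case False
  have fY: "finite Y" using u by (metis finite_Un finite_atLeastAtMost)
  define M where "M = Max Y"
  have MY: "M \<in> Y" using Max_in[OF fY False] M_def by simp
  have M2: "2 \<le> M" "M \<le> Suc b" using MY u by auto
  have Y: "Y = {2..M}"
  proof
    show "Y \<subseteq> {2..M}" using u Max_ge[OF fY] M_def by auto
    show "{2..M} \<subseteq> Y"
    proof
      fix z assume z: "z \<in> {2..M}"
      hence "z \<in> X \<union> Y" using u M2 by auto
      moreover have "z \<notin> X" using o MY z by force
      ultimately show "z \<in> Y" by blast
    qed
  qed
  have cY: "card Y = M - 1" using Y by simp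
  have "X = {M+1..Suc b}"
  proof
    show "X \<subseteq> {M+1..Suc b}"
    proof
      fix z assume z: "z \<in> X"
      hence "M < z" using o MY by blast
      thus "z \<in> {M+1..Suc b}" using z u by auto
    qed
    show "{M+1..Suc b} \<subseteq> X"
    proof
      fix z assume z: "z \<in> {M+1..Suc b}"
      hence "z \<in> X \<union> Y" using u M2 by auto
      moreover have "z \<notin> Y" using Y z by auto
      ultimately show "z \<in> X" by blast
    qed
  qed
  thus ?thesis using Y cY M2 by auto
qed

lemma con_surj:
  assumes w: "w \<in> V (Suc b)"
  shows "\<exists>m r x y. m \<le> b \<and> r \<in> {[],[1]} \<and> x \<in> V (b-m) \<and> y \<in> V m \<and> w = con m x y r"
proof -
  have sw: "set w = {1..Suc b}" and vw: "valid w" using w by (auto simp: V_def)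
  have "1 \<in> set w" using sw by simp
  from split_list_first[OF this] obtain A T where wAT: "w = A @ 1 # T" and nA: "1 \<notin> set A" by blast
  have g1: "\<And>v. v \<in> set w \<Longrightarrow> 1 \<le> v" using ge1[OF w] .
  obtain B r where T: "T = B @ r" and r: "r \<in> {[],[1]}" and nB: "1 \<notin> set B"
  proof (cases "1 \<in> set T")
    case False
    thus ?thesis using that[of T "[]"] by simp
  next
    case True
    from split_list_first[OF this] obtain B C where TBC: "T = B @ 1 # C" and nB: "1 \<notin> set B" by blast
    have "C = []"
    proof (rule ccontr)
      assume "C \<noteq> []"
      then obtain h C' where C: "C = h # C'" by (cases C) auto
      have "subseq [1,h] (1 # h # C')" by simp
      hence "subseq [1,h] (B @ 1 # h # C')" by (rule subseq_drop_many)
      hence "subseq [1,1,h] (1 # B @ 1 # h # C')" by simp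
      hence s: "subseq [1,1,h] w" unfolding wAT TBC C by (rule subseq_drop_many)
      have "h \<in> set w" unfolding wAT TBC C by simp
      hence "1 \<le> h" using g1 by blast
      hence "P3 1 1 h" unfolding P3_def by auto
      thus False using s vw unfolding valid_def by blast
    qed
    thus ?thesis using that[of B "[1]"] TBC nB by simp
  qed
  have w2: "w = A @ 1 # B @ r" using wAT T by simp
  have ord: "\<forall>u\<in>set A. \<forall>v\<in>set B. v < u"
  proof (intro ballI)
    fix u v assume u: "u \<in> set A" and v: "v \<in> set B"
    have "subseq [u] A" using u by (simp add: subseq_singleton_left)
    moreover have "subseq [1,v] (1 # B @ r)" using v by (simp add: subseq_singleton_left)
    ultimately have "subseq ([u] @ [1,v]) (A @ 1 # B @ r)" by (rule list_emb_append_mono)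
    hence s: "subseq [u,1,v] w" using w2 by simp
    have "u \<in> set w" using u w2 by simp
    hence "1 < u" using g1 nA u by (metis le_neq_implies_less)
    show "v < u"
    proof (rule ccontr)
      assume "\<not> v < u"
      hence "P3 u 1 v" using \<open>1 < u\<close> unfolding P3_def by auto
      thus False using s vw unfolding valid_def by blast
    qed
  qed
  have sr: "set r \<subseteq> {1}" using r by auto
  have un: "set A \<union> set B = {2..Suc b}"
  proof -
    have "set w = set A \<union> {1} \<union> set B \<union> set r" using w2 by auto
    hence eq: "set A \<union> set B \<union> {1} = {1..Suc b}" using sw sr by auto
    show ?thesis
    proof (rule set_eqI)
      fix z
      have "z \<in> set A \<union> set B \<union> {1} \<longleftrightarrow> z \<in> {1..Suc b}" using eq by simp
      thus "z \<in> set A \<union> set B \<longleftrightarrow> z \<in> {2..Suc b}" using nA nB by (cases "z = 1") auto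
    qed
  qed
  define m where "m = card (set B)"
  from split_interval[OF un ord] have sB: "set B = {2..Suc m}" and sA: "set A = {m+2..Suc b}" and mb: "m \<le> b"
    unfolding m_def by auto
  define x where "x = map (\<lambda>v. v - (m+1)) A"
  define y where "y = map (\<lambda>v. v - 1) B"
  have Ax: "map (\<lambda>v. v + (m+1)) x = A" unfolding x_def map_map
    by (rule map_idI) (use sA in auto)
  have By: "map Suc y = B" unfolding y_def map_map
    by (rule map_idI) (use sB in auto)
  have subA: "subseq A w" unfolding w2 by (rule subseq_rev_drop_many) simp
  have "subseq B (B @ r)" by (rule subseq_rev_drop_many) simp
  hence "subseq B (1 # B @ r)" by (rule list_emb.list_emb_Cons)
  hence subB: "subseq B w" unfolding w2 by (rule subseq_drop_many)
  have vA: "valid A" by (rule valid_subseq[OF vw subA])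
  have vB: "valid B" by (rule valid_subseq[OF vw subB])
  have vx: "valid x" unfolding x_def by (rule valid_map[OF vA]) (use sA in auto)
  have vy: "valid y" unfolding y_def by (rule valid_map[OF vB]) (use sB in auto)
  have sx: "set x = {1..b-m}"
  proof -
    have "set x = (\<lambda>v. v - (m+1)) ` {(m+1)+1..Suc b}" unfolding x_def set_map sA by simp
    also have "\<dots> = {1..Suc b - (m+1)}" by (rule img_sub)
    finally show ?thesis by simp
  qed
  have sy: "set y = {1..m}"
  proof -
    have "set y = (\<lambda>v. v - 1) ` {1+1..Suc m}" unfolding y_def set_map sB by (simp add: numeral_2_eq_2)
    also have "\<dots> = {1..Suc m - 1}" by (rule img_sub)
    finally show ?thesis by simp
  qed
  have "w = con m x y r" unfolding w2 con_def Ax By ..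
  moreover have "x \<in> V (b-m)" "y \<in> V m" using vx vy sx sy by (auto simp: V_def)
  ultimately show ?thesis using mb r by blast
qed

lemma app1_unique: "1 \<notin> set a \<Longrightarrow> 1 \<notin> set a' \<Longrightarrow> a @ 1 # c = a' @ 1 # c' \<Longrightarrow> a = a' \<and> c = c'"
proof (induction a arbitrary: a')
  case Nil thus ?case by (cases a') auto
next
  case (Cons h t) thus ?case by (cases a') auto
qed

lemma con_eq:
  assumes e: "con m x y r = con m' x' y' r'" and r: "r \<in> {[],[1]}" "r' \<in> {[],[1]}"
    and x: "x \<in> V k" and x': "x' \<in> V k'" and y: "y \<in> V m" and y': "y' \<in> V m'"
  shows "m = m' \<and> r = r' \<and> x = x' \<and> y = y'"
proof -
  have n1: "1 \<notin> set (map (\<lambda>v. v + (m+1)) x)" "1 \<notin> set (map (\<lambda>v. v + (m'+1)) x')"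
    using ge1[OF x] ge1[OF x'] by force+
  from app1_unique[OF n1 e[unfolded con_def]] have
    ex: "map (\<lambda>v. v + (m+1)) x = map (\<lambda>v. v + (m'+1)) x'" and ey: "map Suc y @ r = map Suc y' @ r'"
    by auto
  have n2: "1 \<notin> set (map Suc y)" "1 \<notin> set (map Suc y')" using ge1[OF y] ge1[OF y'] by force+
  have rr: "r = r'"
  proof (rule ccontr)
    assume "r \<noteq> r'"
    hence "(r = [] \<and> r' = [1]) \<or> (r = [1] \<and> r' = [])" using r by auto
    thus False using ey n2 by (metis append_Nil2 in_set_conv_decomp)
  qed
  hence yy: "y = y'" using ey by simp
  have "set y = {1..m}" "set y' = {1..m'}" using y y' by (simp_all add: V_def)
  hence "card (set y) = m" "card (set y') = m'" by simp_all
  hence mm: "m = m'" using yy by simp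
  have "inj (\<lambda>v::nat. v + (m+1))" by (simp add: inj_on_def)
  hence "x = x'" using ex mm by simp
  thus ?thesis using mm rr yy by simp
qed

definition D :: "nat \<Rightarrow> (nat \<times> nat list \<times> nat list \<times> nat list) set" where
  "D b = (SIGMA m:{..b}. SIGMA r:{[],[1]}. V (b-m) \<times> V m)"

definition conp :: "nat \<times> nat list \<times> nat list \<times> nat list \<Rightarrow> nat list" where
  "conp p = (case p of (m,r,x,y) \<Rightarrow> con m x y r)"

lemma con_inj: "inj_on conp (D b)"
  unfolding inj_on_def D_def conp_def
  by (auto dest: con_eq)

lemma V_Suc: "V (Suc b) = conp ` D b"
proof
  show "conp ` D b \<subseteq> V (Suc b)" unfolding D_def conp_def by (auto intro: con_in)
  show "V (Suc b) \<subseteq> conp ` D b"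
  proof
    fix w assume "w \<in> V (Suc b)"
    from con_surj[OF this] obtain m r x y where h: "m \<le> b" "r \<in> {[],[1]}" "x \<in> V (b-m)" "y \<in> V m" "w = con m x y r"
      by blast
    show "w \<in> conp ` D b"
      by (rule image_eqI[where x="(m,r,x,y)"]) (use h in \<open>auto simp: D_def conp_def\<close>)
  qed
qed

lemma V0: "V 0 = {[]}"
  unfolding V_def valid_def by auto

lemma finite_V: "finite (V b)"
proof (induction b rule: less_induct)
  case (less b)
  show ?case
  proof (cases b)
    case 0 thus ?thesis by (simp add: V0)
  next
    case (Suc n)
    have "finite (D n)" unfolding D_def using less Suc
      by (intro finite_SigmaI finite_cartesian_product) auto
    thus ?thesis unfolding Suc V_Suc by simp
  qed
qed



definition Q :: "nat \<Rightarrow> real fps" where "Q b = (\<Sum>w\<in>V b. fps_X ^ length w)"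

lemma sum_Sigma': "finite A \<Longrightarrow> (\<forall>x\<in>A. finite (B x)) \<Longrightarrow> sum f (Sigma A B) = (\<Sum>x\<in>A. \<Sum>y\<in>B x. f (x,y))"
  using sum.Sigma[of A B "\<lambda>x y. f (x,y)"] by simp

lemma inner_cart: "(\<Sum>xy\<in>A \<times> B. (fps_X::real fps) ^ length (conp (m,r,xy))) =
      (\<Sum>x\<in>A. \<Sum>y\<in>B. fps_X^(1 + length r) * (fps_X ^ length x * fps_X ^ length y))"
  unfolding sum.cartesian_product
  by (intro sum.cong refl) (auto simp: conp_def con_def power_add[symmetric] algebra_simps)

lemma fac: "(\<Sum>x\<in>A. \<Sum>y\<in>B. c * (f x * g y)) = (c::real fps) * (sum f A * sum g B)"
proof -
  have "c * (sum f A * sum g B) = c * (\<Sum>x\<in>A. \<Sum>y\<in>B. f x * g y)" by (simp only: sum_product)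
  also have "\<dots> = (\<Sum>x\<in>A. c * (\<Sum>y\<in>B. f x * g y))" by (rule sum_distrib_left)
  also have "\<dots> = (\<Sum>x\<in>A. \<Sum>y\<in>B. c * (f x * g y))" by (simp only: sum_distrib_left)
  finally show ?thesis by simp
qed

lemma Q0: "Q 0 = 1" by (simp add: Q_def V0)

lemma Q_Suc: "Q (Suc b) = (\<Sum>m\<le>b. (fps_X + fps_X^2) * (Q (b-m) * Q m))"
proof -
  have "Q (Suc b) = (\<Sum>p\<in>D b. fps_X ^ length (conp p))"
    unfolding Q_def V_Suc by (simp add: sum.reindex[OF con_inj])
  also have "\<dots> = (\<Sum>m\<le>b. \<Sum>q\<in>(SIGMA r:{[],[1]}. V (b-m) \<times> V m). fps_X ^ length (conp (m,q)))"
    unfolding D_def by (rule sum_Sigma') (auto simp: finite_V)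
  also have "\<dots> = (\<Sum>m\<le>b. \<Sum>r\<in>{[],[1::nat]}. \<Sum>xy\<in>V (b-m) \<times> V m. fps_X ^ length (conp (m,r,xy)))"
  proof (intro sum.cong refl)
    fix m
    show "(\<Sum>q\<in>(SIGMA r:{[],[1]}. V (b-m) \<times> V m). fps_X ^ length (conp (m,q))) =
          (\<Sum>r\<in>{[],[1::nat]}. \<Sum>xy\<in>V (b-m) \<times> V m. (fps_X::real fps) ^ length (conp (m,r,xy)))"
      using sum_Sigma'[of "{[],[1]}" "\<lambda>r. V (b-m) \<times> V m" "\<lambda>q. (fps_X::real fps) ^ length (conp (m,q))"]
      by (simp only: finite_V finite_cartesian_product finite.emptyI finite_insert ball_simps simp_thms)
  qed
  also have "\<dots> = (\<Sum>m\<le>b. \<Sum>r\<in>{[],[1::nat]}. \<Sum>x\<in>V (b-m). \<Sum>y\<in>V m. fps_X^(1 + length r) * (fps_X ^ length x * fps_X ^ length y))"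
    by (simp only: inner_cart)
  also have "\<dots> = (\<Sum>m\<le>b. \<Sum>r\<in>{[],[1::nat]}. fps_X^(1 + length r) * (Q (b-m) * Q m))"
    unfolding Q_def by (simp only: fac)
  also have "\<dots> = (\<Sum>m\<le>b. (fps_X + fps_X^2) * (Q (b-m) * Q m))"
    by (intro sum.cong refl) (simp add: algebra_simps power2_eq_square)
  finally show ?thesis .
qed

lemma fps_const_sum: "fps_const (sum f A) = (\<Sum>x\<in>A. fps_const (f x) :: real fps)"
  by (induct A rule: infinite_finite_induct) (auto simp: fps_const_add[symmetric] simp del: fps_const_add)

lemma Q_closed: "Q b = fps_const (cr b) * (fps_X + fps_X^2)^b"
proof (induction b rule: less_induct)
  case (less b)
  show ?case
  proof (cases b)
    case 0 thus ?thesis by (simp add: Q0 cr_def)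
  next
    case (Suc n)
    have "Q b = (\<Sum>m\<le>n. (fps_X + fps_X^2) * (fps_const (cr (n-m)) * (fps_X + fps_X^2)^(n-m) * (fps_const (cr m) * (fps_X + fps_X^2)^m)))"
      unfolding Suc Q_Suc by (intro sum.cong refl) (simp add: less Suc)
    also have "\<dots> = (\<Sum>m\<le>n. fps_const (cr (n-m) * cr m) * (fps_X + fps_X^2)^(Suc n))"
    proof (intro sum.cong refl)
      fix m assume "m \<in> {..n}"
      hence "(fps_X + fps_X^2 :: real fps)^(n-m) * (fps_X + fps_X^2)^m = (fps_X + fps_X^2)^n"
        by (simp add: power_add[symmetric])
      thus "(fps_X + fps_X^2) * (fps_const (cr (n-m)) * (fps_X + fps_X^2)^(n-m) * (fps_const (cr m) * (fps_X + fps_X^2)^m))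
           = fps_const (cr (n-m) * cr m) * (fps_X + fps_X^2)^(Suc n)"
        by (simp add: fps_const_mult[symmetric] ac_simps del: fps_const_mult)
    qed
    also have "\<dots> = fps_const (\<Sum>m\<le>n. cr (n-m) * cr m) * (fps_X + fps_X^2)^(Suc n)"
      by (simp add: fps_const_sum sum_distrib_right)
    also have "\<dots> = fps_const (cr b) * (fps_X + fps_X^2)^b" by (simp add: cr_conv Suc)
    finally show ?thesis .
  qed
qed

lemma P_nth: "b \<le> k \<Longrightarrow> fps_nth ((fps_X + fps_X^2 :: real fps)^b) k = real (b choose (k-b))"
proof -
  assume bk: "b \<le> k"
  have "(fps_X + fps_X^2 :: real fps)^b = fps_X^b * (1 + fps_X)^b"
    by (simp add: power_mult_distrib[symmetric] algebra_simps power2_eq_square)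
  also have "(1 + fps_X :: real fps)^b = fps_binomial (of_nat b)" by (simp add: fps_binomial_of_nat)
  finally have "fps_nth ((fps_X + fps_X^2 :: real fps)^b) k = (of_nat b gchoose (k-b))"
    using bk by (simp add: fps_X_power_mult_nth)
  thus ?thesis by (simp add: binomial_gbinomial)
qed

lemma Q_nth: "fps_nth (Q b) k = real (card {w\<in>V b. length w = k})"
proof -
  have "fps_nth (Q b) k = (\<Sum>w\<in>V b. if length w = k then 1 else 0)"
    unfolding Q_def fps_sum_nth by (intro sum.cong refl) auto
  also have "\<dots> = (\<Sum>w\<in>{w\<in>V b. length w = k}. 1)"
    by (rule sum.inter_filter[OF finite_V, symmetric])
  finally show ?thesis by simp
qed

lemma count_real: "b \<le> k \<Longrightarrow> real (card {w\<in>V b. length w = k}) = cr b * real (b choose (k-b))"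
  using Q_nth[of b k] Q_closed[of b] P_nth[of b k] by simp

lemma catalan_cr: "real (catalan b) = cr b"
proof -
  define N where "N = card {w\<in>V b. length w = b}"
  have cN: "cr b = real N" using count_real[of b b] N_def by simp
  hence "real (2*b choose b) = real ((b+1) * N)" unfolding cr_def by (simp add: field_simps)
  hence "(2*b choose b) = (b+1) * N" by (simp only: of_nat_eq_iff)
  hence "catalan b = (b+1)*N div (b+1)" unfolding catalan_def by (simp only:)
  also have "\<dots> = N" by (rule nonzero_mult_div_cancel_left) simp
  finally have "catalan b = N" .
  thus ?thesis using cN by simp
qed

theorem mainTheorem10:
  fixes b k :: nat
  assumes "1 \<le> b" and "b \<le> k"
  shows "card {w :: nat list. length w = k \<and> set w = {1..b} \<and>
            avoids w [1,1,1] \<and> avoids w [2,1,2] \<and> avoids w [1,1,2] \<and> avoids w [2,1,3]}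
         = (b choose (k - b)) * catalan b"
proof -
  have "{w :: nat list. length w = k \<and> set w = {1..b} \<and>
            avoids w [1,1,1] \<and> avoids w [2,1,2] \<and> avoids w [1,1,2] \<and> avoids w [2,1,3]}
        = {w\<in>V b. length w = k}"
    unfolding V_def using valid_iff by blast
  moreover have "real (card {w\<in>V b. length w = k}) = real ((b choose (k - b)) * catalan b)"
    using count_real[OF assms(2)] catalan_cr by simp
  ultimately show ?thesis by (simp only: of_nat_eq_iff)
qed

end
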